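(* For every natural number $n\geq 2$, the Alexandroff $n$-plicate $D_n(2^{\mathbb{N}})$ is a Rosenthal compactum which is premetric of degree at most $n$ but is not premetric of degree at most $n-1$.
   Context: A Rosenthal compactum is a topological space homeomorphic to a compact subset of $\mathcal{B}_1(\mathbb{N}^{\mathbb{N}})$, the space of first Baire class real functions on $\mathbb{N}^{\mathbb{N}}$ with the pointwise topology. A compact space $K$ is premetric of degree at most $m$ if there is a continuous surjection $f:K\to M$ onto a metrizable compact space $M$ with $|f^{-1}(x)|\leq m$ for all $x\in M$. For $n\geq 2$ and a Hausdorff space $X$, the Alexandroff $n$-plicate $D_n(X)$ is the set $X\times\{0,\ldots,n-1\}$ with the topology in which the points $(x,i)$ with $i\in\{1,\ldots,n-1\}$ are isolated and a point $(x,0)$ has basic neighbourhoods $\mathscr{U}\times\{0,\ldots,n-1\}\setminus\{(x,i):1\leq i\leq n-1\}$, where $\mathscr{U}$ ranges over neighbourhoods of $x$ in $X$. $2^{\mathbb{N}}$ is the Cantor space. *)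

theory Defs
  imports "HOL-Analysis.Analysis"
begin

definition baire_space :: "(nat \<Rightarrow> nat) topology" where
  "baire_space = product_topology (\<lambda>_::nat. discrete_topology (UNIV::nat set)) UNIV"

definition cantor_space :: "(nat \<Rightarrow> bool) topology" where
  "cantor_space = product_topology (\<lambda>_::nat. discrete_topology (UNIV::bool set)) UNIV"

definition baire_one :: "((nat \<Rightarrow> nat) \<Rightarrow> real) set" where
  "baire_one = {f. \<exists>g :: nat \<Rightarrow> (nat \<Rightarrow> nat) \<Rightarrow> real.
       (\<forall>k. continuous_map baire_space euclideanreal (g k)) \<and>
       (\<forall>x \<in> topspace baire_space. (\<lambda>k. g k x) \<longlonglongrightarrow> f x)}"

definition pointwise_top :: "((nat \<Rightarrow> nat) \<Rightarrow> real) topology" where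
  "pointwise_top = product_topology (\<lambda>_::nat \<Rightarrow> nat. euclideanreal) UNIV"

definition rosenthal_compactum :: "'a topology \<Rightarrow> bool" where
  "rosenthal_compactum X \<longleftrightarrow>
     (\<exists>K. K \<subseteq> baire_one \<and> compactin pointwise_top K \<and>
          X homeomorphic_space subtopology pointwise_top K)"

text \<open>Premetric of degree at most m, with the metrizable compact image M living
  on a type 'b (given by the itself parameter).\<close>
definition premetric_le :: "'a topology \<Rightarrow> nat \<Rightarrow> 'b itself \<Rightarrow> bool" where
  "premetric_le X m (_ :: 'b itself) \<longleftrightarrow>
     (\<exists>(M :: 'b topology) f. compact_space M \<and> metrizable_space M \<and>
        continuous_map X M f \<and> f ` topspace X = topspace M \<and>
        (\<forall>y \<in> topspace M. finite {x \<in> topspace X. f x = y} \<and>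
                            card {x \<in> topspace X. f x = y} \<le> m))"

definition alex_open :: "'a topology \<Rightarrow> nat \<Rightarrow> ('a \<times> nat) set \<Rightarrow> bool" where
  "alex_open X n U \<longleftrightarrow> U \<subseteq> topspace X \<times> {..<n} \<and>
     (\<forall>x. (x, 0) \<in> U \<longrightarrow>
        (\<exists>V. openin X V \<and> x \<in> V \<and> (V \<times> {..<n}) - ({x} \<times> {1..<n}) \<subseteq> U))"

lemma istopology_alex_open: "istopology (alex_open X n)"
  unfolding istopology_def
proof (intro conjI allI impI)
  fix S T assume S: "alex_open X n S" and T: "alex_open X n T"
  show "alex_open X n (S \<inter> T)"
    unfolding alex_open_def
  proof (intro conjI allI impI)
    show "S \<inter> T \<subseteq> topspace X \<times> {..<n}" using S unfolding alex_open_def by auto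
  next
    fix x assume "(x, 0) \<in> S \<inter> T"
    then obtain V W where "openin X V" "x \<in> V" "(V \<times> {..<n}) - ({x} \<times> {1..<n}) \<subseteq> S"
      "openin X W" "x \<in> W" "(W \<times> {..<n}) - ({x} \<times> {1..<n}) \<subseteq> T"
      using S T unfolding alex_open_def by blast
    then show "\<exists>V. openin X V \<and> x \<in> V \<and> V \<times> {..<n} - {x} \<times> {1..<n} \<subseteq> S \<inter> T"
      by (intro exI[of _ "V \<inter> W"]) auto
  qed
next
  fix K assume K: "\<forall>U\<in>K. alex_open X n U"
  show "alex_open X n (\<Union>K)"
    unfolding alex_open_def
  proof (intro conjI allI impI)
    show "\<Union>K \<subseteq> topspace X \<times> {..<n}" using K unfolding alex_open_def by (meson Sup_least)
  next
    fix x assume "(x, 0) \<in> \<Union>K"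
    then obtain U where U: "U \<in> K" "(x,0) \<in> U" by blast
    then obtain V where "openin X V" "x \<in> V" "V \<times> {..<n} - {x} \<times> {1..<n} \<subseteq> U"
      using K unfolding alex_open_def by meson
    then show "\<exists>V. openin X V \<and> x \<in> V \<and> V \<times> {..<n} - {x} \<times> {1..<n} \<subseteq> \<Union>K"
      using U by blast
  qed
qed

definition alexandroff_duplicate :: "nat \<Rightarrow> 'a topology \<Rightarrow> ('a \<times> nat) topology" where
  "alexandroff_duplicate n X = topology (alex_open X n)"

lemma openin_alexandroff_duplicate:
  "openin (alexandroff_duplicate n X) U \<longleftrightarrow> alex_open X n U"
  unfolding alexandroff_duplicate_def by (simp add: istopology_alex_open)

end

theory Submission imports Defs begin

lemma topspace_alex: "topspace (alexandroff_duplicate n X) = topspace X \<times> {..<n}"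
proof
  show "topspace (alexandroff_duplicate n X) \<subseteq> topspace X \<times> {..<n}"
    unfolding topspace_def openin_alexandroff_duplicate alex_open_def by blast
  have "alex_open X n (topspace X \<times> {..<n})"
    unfolding alex_open_def by (auto intro!: exI[of _ "topspace X"])
  then show "topspace X \<times> {..<n} \<subseteq> topspace (alexandroff_duplicate n X)"
    by (metis openin_alexandroff_duplicate openin_subset)
qed

lemma continuous_fst_alex: "continuous_map (alexandroff_duplicate n X) X fst"
  unfolding continuous_map_def
proof (intro conjI allI impI)
  show "fst \<in> topspace (alexandroff_duplicate n X) \<rightarrow> topspace X"
    by (auto simp: topspace_alex)
  fix U assume U: "openin X U"
  have eq: "{x \<in> topspace (alexandroff_duplicate n X). fst x \<in> U} = U \<times> {..<n}"
    using openin_subset[OF U] by (auto simp: topspace_alex)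
  show "openin (alexandroff_duplicate n X) {x \<in> topspace (alexandroff_duplicate n X). fst x \<in> U}"
    unfolding eq openin_alexandroff_duplicate alex_open_def
    using openin_subset[OF U] U by blast
qed

lemma continuous_indic_alex:
  assumes "t1_space X"
  shows "continuous_map (alexandroff_duplicate n X) euclideanreal (\<lambda>p. if fst p = z then real (snd p) else 0)"
  unfolding continuous_map_def
proof (intro conjI allI impI)
  show "(\<lambda>p. if fst p = z then real (snd p) else 0) \<in> topspace (alexandroff_duplicate n X) \<rightarrow> topspace euclideanreal"
    by auto
  fix U :: "real set" assume U: "openin euclideanreal U"
  let ?S = "{x \<in> topspace (alexandroff_duplicate n X). (if fst x = z then real (snd x) else 0) \<in> U}"
  have "alex_open X n ?S"
    unfolding alex_open_def
  proof (intro conjI allI impI)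
    show "?S \<subseteq> topspace X \<times> {..<n}" by (auto simp: topspace_alex)
    fix x assume x: "(x, 0) \<in> ?S"
    then have x0: "0 \<in> U" "x \<in> topspace X" "0 < n" by (auto simp: topspace_alex split: if_splits)
    show "\<exists>V. openin X V \<and> x \<in> V \<and> V \<times> {..<n} - {x} \<times> {1..<n} \<subseteq> ?S"
    proof (cases "x = z")
      case True
      show ?thesis using x0 True
        by (intro exI[of _ "topspace X"]) (auto simp: topspace_alex not_less_eq_eq)
    next
      case False
      have "openin X (topspace X - {z})"
      proof (cases "z \<in> topspace X")
        case True then show ?thesis
          using assms by (simp add: openin_diff t1_space_closedin_singleton)
      next
        case False then have "topspace X - {z} = topspace X" by auto
        then show ?thesis by simp
      qed
      then show ?thesis using x0 False
        by (intro exI[of _ "topspace X - {z}"]) (auto simp: topspace_alex)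
    qed
  qed
  then show "openin (alexandroff_duplicate n X) ?S"
    by (simp add: openin_alexandroff_duplicate)
qed

lemma compact_alex:
  assumes "compact_space X"
  shows "compact_space (alexandroff_duplicate n X)"
  unfolding compact_space_alt
proof (intro allI impI)
  fix \<U> assume H: "(\<forall>U\<in>\<U>. openin (alexandroff_duplicate n X) U) \<and> topspace (alexandroff_duplicate n X) \<subseteq> \<Union>\<U>"
  then have op: "\<And>U. U \<in> \<U> \<Longrightarrow> alex_open X n U" and cov: "topspace X \<times> {..<n} \<subseteq> \<Union>\<U>"
    by (auto simp: openin_alexandroff_duplicate topspace_alex)
  show "\<exists>\<F>. finite \<F> \<and> \<F> \<subseteq> \<U> \<and> topspace (alexandroff_duplicate n X) \<subseteq> \<Union>\<F>"
  proof (cases "n = 0")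
    case True then show ?thesis by (auto simp: topspace_alex)
  next
    case False
    have "\<forall>p \<in> topspace X \<times> {..<n}. \<exists>U. U \<in> \<U> \<and> p \<in> U" using cov by blast
    then obtain W where W: "\<And>p. p \<in> topspace X \<times> {..<n} \<Longrightarrow> W p \<in> \<U> \<and> p \<in> W p" by metis
    have "\<forall>x \<in> topspace X. \<exists>V. openin X V \<and> x \<in> V \<and> V \<times> {..<n} - {x} \<times> {1..<n} \<subseteq> W (x,0)"
      using W op False unfolding alex_open_def by (metis SigmaI lessThan_iff not_gr0)
    then obtain V where V: "\<And>x. x \<in> topspace X \<Longrightarrow> openin X (V x) \<and> x \<in> V x \<and> V x \<times> {..<n} - {x} \<times> {1..<n} \<subseteq> W (x,0)"
      by metis
    have "\<exists>\<F>. finite \<F> \<and> \<F> \<subseteq> V ` topspace X \<and> topspace X \<subseteq> \<Union>\<F>"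
      using assms V unfolding compact_space_alt by (intro compact_space_alt[THEN iffD1, OF assms, rule_format]) auto
    then obtain F where F: "finite F" "F \<subseteq> topspace X" "topspace X \<subseteq> \<Union>(V ` F)"
      by (metis finite_subset_image)
    show ?thesis
    proof (intro exI conjI)
      show "finite (W ` (F \<times> {..<n}))" using F by auto
      show "W ` (F \<times> {..<n}) \<subseteq> \<U>" using F W by auto
      show "topspace (alexandroff_duplicate n X) \<subseteq> \<Union> (W ` (F \<times> {..<n}))"
      proof
        fix p assume "p \<in> topspace (alexandroff_duplicate n X)"
        then obtain y i where p: "p = (y,i)" "y \<in> topspace X" "i < n" by (auto simp: topspace_alex)
        then obtain x where x: "x \<in> F" "y \<in> V x" using F by auto
        show "p \<in> \<Union> (W ` (F \<times> {..<n}))"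
        proof (cases "y = x \<and> i \<ge> 1")
          case True then show ?thesis using p x W F by (intro UnionI[of "W (x,i)"]) auto
        next
          case False
          have "p \<in> V x \<times> {..<n} - {x} \<times> {1..<n}" using False x p by auto
          then have "p \<in> W (x,0)" using V[of x] x F by blast
          then show ?thesis using x \<open>n \<noteq> 0\<close> by (intro UnionI[of "W (x,0)"]) auto
        qed
      qed
    qed
  qed
qed


lemma topspace_cantor: "topspace cantor_space = UNIV"
  by (simp add: cantor_space_def)

lemma compact_cantor: "compact_space cantor_space"
  unfolding cantor_space_def by (simp add: compact_space_product_topology compact_space_discrete_topology)

lemma Hausdorff_cantor: "Hausdorff_space cantor_space"
  unfolding cantor_space_def by (simp add: Hausdorff_space_product_topology)

lemma t1_cantor: "t1_space cantor_space"
  by (simp add: Hausdorff_cantor Hausdorff_imp_t1_space)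

lemma metrizable_cantor: "metrizable_space cantor_space"
  unfolding cantor_space_def by (simp add: metrizable_space_product_topology)

lemma uncountable_cantor: "\<not> countable (UNIV :: (nat \<Rightarrow> bool) set)"
proof
  assume "countable (UNIV :: (nat \<Rightarrow> bool) set)"
  then obtain g :: "nat \<Rightarrow> (nat \<Rightarrow> bool)" where "surj g"
    by (metis uncountable_def UNIV_not_empty)
  then obtain k where "g k = (\<lambda>j. \<not> g j j)" by (metis surjD)
  then show False by (metis)
qed

lemma premetric_n:
  assumes "n \<ge> 2"
  shows "premetric_le (alexandroff_duplicate n cantor_space) n TYPE((nat \<Rightarrow> bool) \<times> nat)"
  unfolding premetric_le_def
proof (intro exI conjI ballI)
  let ?M = "prod_topology cantor_space (discrete_topology {0::nat})"
  let ?f = "\<lambda>p::(nat\<Rightarrow>bool)\<times>nat. (fst p, 0::nat)"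
  show "compact_space ?M" by (simp add: compact_space_prod_topology compact_cantor compact_space_discrete_topology)
  show "metrizable_space ?M" by (simp add: metrizable_space_prod_topology metrizable_cantor)
  show "continuous_map (alexandroff_duplicate n cantor_space) ?M ?f"
    by (simp add: continuous_map_pairwise o_def continuous_fst_alex)
  show "?f ` topspace (alexandroff_duplicate n cantor_space) = topspace ?M"
    using assms by (auto simp: topspace_alex topspace_cantor image_iff intro!: exI[of _ 0])
  fix y assume y: "y \<in> topspace ?M"
  then have eq: "{x \<in> topspace (alexandroff_duplicate n cantor_space). ?f x = y} = {fst y} \<times> {..<n}"
    by (auto simp: topspace_alex topspace_cantor)
  show "finite {x \<in> topspace (alexandroff_duplicate n cantor_space). ?f x = y}"
    unfolding eq by simp
  show "card {x \<in> topspace (alexandroff_duplicate n cantor_space). ?f x = y} \<le> n"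
    unfolding eq by (simp add: card_cartesian_product)
qed


lemma not_premetric_aux:
  fixes f :: "(nat\<Rightarrow>bool)\<times>nat \<Rightarrow> 'b"
  assumes ms: "Metric_space S d"
    and cont: "continuous_map (alexandroff_duplicate n cantor_space) (Metric_space.mtopology S d) f"
    and ne: "\<And>x. \<exists>i. 1 \<le> i \<and> i < n \<and> f (x,i) \<noteq> f (x,0)"
  shows False
proof -
  interpret Metric_space S d by (rule ms)
  obtain ii where ii: "\<And>x. 1 \<le> ii x \<and> ii x < n \<and> f (x, ii x) \<noteq> f (x,0)"
    using ne by metis
  have n0: "0 < n" using ii[of undefined] by auto
  have inS: "f (x,i) \<in> S" if "i < n" for x i
    using continuous_map_image_subset_topspace[OF cont] that
    by (auto simp: topspace_alex topspace_cantor)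
  define \<delta> where "\<delta> x = d (f (x,0)) (f (x, ii x))" for x
  have \<delta>pos: "\<delta> x > 0" for x
    using ii[of x] inS[of 0 x] inS[of "ii x" x] n0 unfolding \<delta>_def
    by (metis nonneg zero order_le_less)
  define A where "A k = {x. \<delta> x \<ge> 1 / real (Suc k)}" for k
  have cover: "UNIV = (\<Union>k. A k)"
  proof -
    have "\<exists>k. x \<in> A k" for x
    proof -
      obtain k where "inverse (real (Suc k)) < \<delta> x" using \<delta>pos[of x] reals_Archimedean by blast
      then show ?thesis unfolding A_def by (auto simp: field_simps intro!: exI[of _ k])
    qed
    then show ?thesis by blast
  qed
  have fin: "finite (A k)" for k
  proof (rule ccontr)
    assume inf: "infinite (A k)"
    obtain xs where xs: "xs \<in> cantor_space derived_set_of (A k)"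
      using compact_space_imp_Bolzano_Weierstrass[OF compact_cantor inf] by (auto simp: topspace_cantor)
    define r where "r = 1 / (2 * real (Suc k))"
    have r0: "r > 0" unfolding r_def by simp
    let ?p = "f (xs, 0)"
    let ?P = "{q \<in> topspace (alexandroff_duplicate n cantor_space). f q \<in> mball ?p r}"
    have "openin (alexandroff_duplicate n cantor_space) ?P"
      using openin_continuous_map_preimage[OF cont openin_mball] by blast
    then have ao: "alex_open cantor_space n ?P" by (simp add: openin_alexandroff_duplicate)
    have "(xs,0) \<in> ?P" using inS[of 0 xs] n0 r0 by (auto simp: topspace_alex topspace_cantor)
    then obtain V where V: "openin cantor_space V" "xs \<in> V" "V \<times> {..<n} - {xs} \<times> {1..<n} \<subseteq> ?P"
      using ao unfolding alex_open_def by blast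
    then obtain x' where x': "x' \<noteq> xs" "x' \<in> A k" "x' \<in> V"
      using xs unfolding in_derived_set_of by blast
    have m1: "(x',0) \<in> V \<times> {..<n} - {xs} \<times> {1..<n}" using x' n0 by auto
    have m2: "(x',ii x') \<in> V \<times> {..<n} - {xs} \<times> {1..<n}" using x' ii[of x'] by auto
    have "(x',0) \<in> ?P" "(x', ii x') \<in> ?P" using V(3) m1 m2 by (meson subsetD)+
    then have d1: "d ?p (f (x',0)) < r" and d2: "d ?p (f (x',ii x')) < r" by auto
    have "\<delta> x' \<le> d (f (x',0)) ?p + d ?p (f (x',ii x'))"
      unfolding \<delta>_def using inS ii[of x'] n0 by (intro triangle) auto
    also have "\<dots> < 2 * r" using d1 d2 commute by simp
    also have "\<dots> = 1 / real (Suc k)" unfolding r_def by (simp add: field_simps)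
    finally show False using x'(2) unfolding A_def by simp
  qed
  have "countable (UNIV :: (nat\<Rightarrow>bool) set)"
    unfolding cover by (intro countable_UN) (auto intro: countable_finite fin)
  then show False using uncountable_cantor by simp
qed

lemma not_premetric:
  assumes "n \<ge> 2"
  shows "\<not> premetric_le (alexandroff_duplicate n cantor_space) (n - 1) TYPE('b)"
proof
  assume "premetric_le (alexandroff_duplicate n cantor_space) (n - 1) TYPE('b)"
  then obtain M :: "'b topology" and f where
    M: "metrizable_space M" and cont: "continuous_map (alexandroff_duplicate n cantor_space) M f"
    and fib: "\<forall>y \<in> topspace M. finite {x \<in> topspace (alexandroff_duplicate n cantor_space). f x = y} \<and>
                            card {x \<in> topspace (alexandroff_duplicate n cantor_space). f x = y} \<le> n - 1"
    unfolding premetric_le_def by blast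
  obtain S d where ms: "Metric_space S d" and Meq: "M = Metric_space.mtopology S d"
    using M unfolding metrizable_space_def by blast
  show False
  proof (rule not_premetric_aux[OF ms cont[unfolded Meq]])
    fix x
    show "\<exists>i. 1 \<le> i \<and> i < n \<and> f (x,i) \<noteq> f (x,0)"
    proof (rule ccontr)
      assume "\<not> ?thesis"
      then have all: "\<And>i. i < n \<Longrightarrow> f (x,i) = f (x,0)" by (metis less_one not_le)
      let ?y = "f (x,0)"
      have y: "?y \<in> topspace M"
        using continuous_map_image_subset_topspace[OF cont] assms
        by (auto simp: topspace_alex topspace_cantor)
      have sub: "{x} \<times> {..<n} \<subseteq> {q \<in> topspace (alexandroff_duplicate n cantor_space). f q = ?y}"
        using all by (auto simp: topspace_alex topspace_cantor)
      have "n \<le> card {q \<in> topspace (alexandroff_duplicate n cantor_space). f q = ?y}"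
        using card_mono[OF _ sub] fib y by (simp add: card_cartesian_product)
      then show False using fib y assms by force
    qed
  qed
qed


lemma cont_fin_dep:
  fixes f :: "(nat \<Rightarrow> nat) \<Rightarrow> real"
  assumes dep: "\<And>y y'. (\<forall>j<N. y j = y' j) \<Longrightarrow> f y = f y'"
  shows "continuous_map baire_space euclideanreal f"
  unfolding continuous_map_def
proof (intro conjI allI impI)
  show "f \<in> topspace baire_space \<rightarrow> topspace euclideanreal" by auto
  fix U :: "real set" assume U: "openin euclideanreal U"
  show "openin baire_space {x \<in> topspace baire_space. f x \<in> U}"
  proof (subst openin_subopen, intro ballI)
    fix y assume y: "y \<in> {x \<in> topspace baire_space. f x \<in> U}"
    let ?T = "PiE UNIV (\<lambda>j. if j < N then {y j} else UNIV)"
    have "finite {i \<in> UNIV. (if i < N then {y i} else UNIV) \<noteq> topspace (discrete_topology (UNIV::nat set))}"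
      by (rule finite_subset[of _ "{..<N}"]) auto
    then have "openin baire_space ?T"
      unfolding baire_space_def by (subst openin_PiE_gen) auto
    moreover have "y \<in> ?T" by auto
    moreover have "?T \<subseteq> {x \<in> topspace baire_space. f x \<in> U}"
    proof
      fix z assume "z \<in> ?T"
      then have "\<forall>j<N. y j = z j" by (auto simp: PiE_iff) (metis singletonD)
      then have "f z = f y" using dep by metis
      then show "z \<in> {x \<in> topspace baire_space. f x \<in> U}" using y by (simp add: baire_space_def)
    qed
    ultimately show "\<exists>T. openin baire_space T \<and> y \<in> T \<and> T \<subseteq> {x \<in> topspace baire_space. f x \<in> U}"
      by blast
  qed
qed

definition phi :: "(nat \<Rightarrow> bool) \<Rightarrow> (nat \<Rightarrow> nat)" where
  "phi x = (\<lambda>k. if x k then 1 else 0)"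

definition bv :: "bool \<Rightarrow> real" where "bv b = (if b then 1 else 0)"

definition HH :: "(nat \<Rightarrow> bool) \<times> nat \<Rightarrow> (nat \<Rightarrow> nat) \<Rightarrow> real" where
  "HH p = (\<lambda>y. bv (fst p (y 0)) + (if y = phi (fst p) then real (snd p) else 0))"

lemma phi_inj: "phi x = phi z \<Longrightarrow> x = z"
  unfolding phi_def by (rule ext) (metis one_neq_zero)

lemma HH_baire: "HH p \<in> baire_one"
  unfolding baire_one_def mem_Collect_eq
proof (intro exI conjI allI ballI)
  let ?g = "\<lambda>k y. bv (fst p (y 0)) + (if \<forall>j<k. y j = phi (fst p) j then real (snd p) else 0)"
  fix k
  show "continuous_map baire_space euclideanreal (?g k)"
    by (rule cont_fin_dep[of "Suc k"]) auto
next
  fix y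
  let ?g = "\<lambda>k y. bv (fst p (y 0)) + (if \<forall>j<k. y j = phi (fst p) j then real (snd p) else 0)"
  show "(\<lambda>k. ?g k y) \<longlonglongrightarrow> HH p y"
  proof (rule tendsto_eventually)
    show "\<forall>\<^sub>F k in sequentially. ?g k y = HH p y"
    proof (cases "y = phi (fst p)")
      case True then show ?thesis by (simp add: HH_def)
    next
      case False
      then obtain j where "y j \<noteq> phi (fst p) j" by auto
      then show ?thesis unfolding eventually_sequentially HH_def
        using False by (intro exI[of _ "Suc j"]) auto
    qed
  qed
qed

lemma HH_cont: "continuous_map (alexandroff_duplicate n cantor_space) pointwise_top HH"
  unfolding pointwise_top_def continuous_map_componentwise_UNIV
proof
  fix y :: "nat \<Rightarrow> nat"
  have c1: "continuous_map (alexandroff_duplicate n cantor_space) euclideanreal (\<lambda>p. bv (fst p (y 0)))"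
  proof -
    have "continuous_map cantor_space (discrete_topology UNIV) (\<lambda>x::nat\<Rightarrow>bool. x (y 0))"
      unfolding cantor_space_def by (rule continuous_map_product_projection) simp
    then have "continuous_map cantor_space euclideanreal (\<lambda>x::nat\<Rightarrow>bool. bv (x (y 0)))"
      using continuous_map_compose[of cantor_space "discrete_topology UNIV" "\<lambda>x::nat\<Rightarrow>bool. x (y 0)" euclideanreal bv]
      by (simp add: o_def)
    then show ?thesis
      using continuous_map_compose[OF continuous_fst_alex] by (simp add: o_def)
  qed
  have c2: "continuous_map (alexandroff_duplicate n cantor_space) euclideanreal
             (\<lambda>p. if y = phi (fst p) then real (snd p) else 0)"
  proof (cases "y \<in> range phi")
    case True
    then obtain z where z: "y = phi z" by auto
    have "(\<lambda>p. if y = phi (fst p) then real (snd p) else 0) = (\<lambda>p. if fst p = z then real (snd p) else 0)"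
      using z phi_inj by (auto intro!: ext)
    then show ?thesis using continuous_indic_alex[OF t1_cantor] by simp
  next
    case False
    then have "(\<lambda>p. if y = phi (fst p) then real (snd p) else 0) = (\<lambda>p. 0)" by (auto intro!: ext)
    then show ?thesis by simp
  qed
  show "continuous_map (alexandroff_duplicate n cantor_space) euclideanreal (\<lambda>p. HH p y)"
    unfolding HH_def using continuous_map_add[OF c1 c2] by simp
qed

lemma HH_inj: "inj HH"
proof (rule injI)
  fix p q assume eq: "HH p = HH q"
  obtain x i where p: "p = (x,i)" by fastforce
  obtain x' i' where q: "q = (x',i')" by fastforce
  have "x k = x' k" for k
  proof -
    let ?y = "(\<lambda>j. if j = 0 then k else 2) :: nat \<Rightarrow> nat"
    have ne: "?y \<noteq> phi w" for w
    proof
      assume "?y = phi w" then have "?y 1 = phi w 1" by (rule fun_cong)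
      then have "phi w 1 = 2" by simp
      then show False by (simp add: phi_def split: if_splits)
    qed
    have "HH p ?y = HH q ?y" using eq by simp
    then have "bv (x k) = bv (x' k)" using ne p q unfolding HH_def by simp
    then show ?thesis by (simp add: bv_def split: if_splits)
  qed
  then have xx: "x = x'" by auto
  have "HH p (phi x) = HH q (phi x)" using eq by simp
  then have "i = i'" using p q xx unfolding HH_def by simp
  then show "p = q" using p q xx by simp
qed

lemma rosenthal: "rosenthal_compactum (alexandroff_duplicate n cantor_space)"
  unfolding rosenthal_compactum_def
proof (intro exI conjI)
  let ?D = "alexandroff_duplicate n cantor_space"
  let ?K = "HH ` topspace ?D"
  show "?K \<subseteq> baire_one" using HH_baire by auto
  have cD: "compact_space ?D" by (rule compact_alex[OF compact_cantor])
  show "compactin pointwise_top ?K"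
    using image_compactin[OF cD[unfolded compact_space_def] HH_cont] .
  have Hs: "Hausdorff_space pointwise_top"
    unfolding pointwise_top_def by (simp add: Hausdorff_space_product_topology)
  have tK: "topspace (subtopology pointwise_top ?K) = ?K"
    by (simp add: pointwise_top_def)
  have "homeomorphic_map ?D (subtopology pointwise_top ?K) HH"
  proof (rule continuous_imp_homeomorphic_map)
    show "continuous_map ?D (subtopology pointwise_top ?K) HH"
      by (rule continuous_map_into_subtopology[OF HH_cont]) auto
    show "compact_space ?D" by (rule cD)
    show "Hausdorff_space (subtopology pointwise_top ?K)" using Hs Hausdorff_space_subtopology by blast
    show "HH ` topspace ?D = topspace (subtopology pointwise_top ?K)" using tK by simp
    show "inj_on HH (topspace ?D)" using HH_inj by (meson inj_on_subset subset_UNIV)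
  qed
  then show "?D homeomorphic_space subtopology pointwise_top ?K"
    using homeomorphic_map_imp_homeomorphic_space by blast
qed

theorem mainTheorem8:
  fixes n :: nat
  assumes "n \<ge> 2"
  shows "rosenthal_compactum (alexandroff_duplicate n cantor_space) \<and>
         premetric_le (alexandroff_duplicate n cantor_space) n TYPE((nat \<Rightarrow> bool) \<times> nat) \<and>
         \<not> premetric_le (alexandroff_duplicate n cantor_space) (n - 1) TYPE('b)"
  using rosenthal premetric_n[OF assms] not_premetric[OF assms] by blast

end
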